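(* Let $\mathcal G$ encode a fine mixed subdivision of $n\Delta^{d-1}$ with $n\ge2$, let $t$ be a lattice point of $(n-2)\Delta^{d-1}$, and suppose $\bar j_0,\bar j_1,\dots,\bar j_\ell$ ($\ell\ge1$) is a path in $\mathbb G(t)$ where, for $0\le k\le\ell-1$, the edge between $\bar j_k$ and $\bar j_{k+1}$ has near label $i_k$ at $\bar j_k$ and near label $i'_{k+1}$ at $\bar j_{k+1}$. Then: (a) for each $0\le k\le\ell-1$, in the graph $\mathbb T(t+e_{\bar j_k})\setminus(i_k,\bar j_k)$ the vertices $\bar j_0,\dots,\bar j_k$ lie in a different connected component from the vertices $\bar j_{k+1},\dots,\bar j_\ell$; (b) for all $1\le k\le k'\le\ell-1$, $i'_k\neq i_{k'}$; (c) if $(i,\bar j_k)\in T_t$ for some $0\le k\le\ell$, then $i_{k'}\neq i$ for all $k\le k'\le\ell-1$ and $i'_{k'}\neq i$ for all $1\le k'\le k$.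
   Context: Fix positive integers $n,d$; $K_{n,d}$ is the complete bipartite graph with left vertices $[n]$ and right vertices $[\bar d]=\{\bar1,\dots,\bar d\}$; graphs are identified with edge sets; $RD$ denotes the vector of right-vertex degrees, $\mathbf 1$ the all-ones vector in $\mathbb Z^{[\bar d]}$, $e_{\bar j}$ a unit vector; lattice points of $k\Delta^{d-1}$ are vectors in $\mathbb Z_{\ge0}^{[\bar d]}$ with sum $k$. Two acyclic subgraphs are compatible if whenever both contain a perfect matching between the same $I\subseteq[n]$, $\bar J\subseteq[\bar d]$, these matchings coincide. A collection $\mathcal G$ of subgraphs of $K_{n,d}$ encodes a fine mixed subdivision of $n\Delta^{d-1}$ if: every $G\in\mathcal G$ is a spanning tree of $K_{n,d}$; (tree linkage) for each $G\in\mathcal G$ and each edge $e\in G$ not incident to a leaf, there are $G'\in\mathcal G$, $G'\neq G$, and $e'\in G'$ with $G\setminus e=G'\setminus e'$; (compatibility) any two trees of $\mathcal G$ are compatible. It is known that then for each lattice point $u$ of $(n-1)\Delta^{d-1}$ there is exactly one tree $\mathbb T(u)\in\mathcal G$ with $RD(\mathbb T(u))=u+\mathbf 1$, and these are all the trees of $\mathcal G$. For a lattice point $t$ of $(n-2)\Delta^{d-1}$, the tree-linkage graph $\mathbb G(t)$ is the graph on vertex set $[\bar d]$ in which $\bar j\neq\bar j'$ are adjacent iff $\mathbb T(t+e_{\bar j})\setminus\mathbb T(t+e_{\bar j'})=\{(i,\bar j)\}$ and $\mathbb T(t+e_{\bar j'})\setminus\mathbb T(t+e_{\bar j})=\{(i',\bar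 j')\}$ for some $i,i'\in[n]$; this edge carries the near label $i$ at its endpoint $\bar j$ and the near label $i'$ at its endpoint $\bar j'$. Let $T_t=\bigcap_{\bar j\in[\bar d]}\mathbb T(t+e_{\bar j})$. *)

theory Defs
  imports Main
begin

text \<open>Left vertices of K_{n,d} are 1..n, right vertices are 1..d (the barred ones).
  A graph is an edge set of pairs (i, j) with i a left and j a right vertex.\<close>

datatype vert = Lv nat | Rv nat

type_synonym graph = "(nat \<times> nat) set"

definition verts :: "nat \<Rightarrow> nat \<Rightarrow> vert set" where
  "verts n d = Lv ` {1..n} \<union> Rv ` {1..d}"

definition adj :: "graph \<Rightarrow> (vert \<times> vert) set" where
  "adj G = {(Lv i, Rv j) | i j. (i, j) \<in> G} \<union> {(Rv j, Lv i) | i j. (i, j) \<in> G}"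

definition conn :: "graph \<Rightarrow> vert \<Rightarrow> vert \<Rightarrow> bool" where
  "conn G u v \<longleftrightarrow> (u, v) \<in> (adj G)\<^sup>*"

definition is_cycle :: "graph \<Rightarrow> vert list \<Rightarrow> bool" where
  "is_cycle G vs \<longleftrightarrow> length vs \<ge> 3 \<and> distinct vs \<and>
     (\<forall>k < length vs - 1. (vs ! k, vs ! Suc k) \<in> adj G) \<and>
     (last vs, hd vs) \<in> adj G"

definition acyclic_graph :: "graph \<Rightarrow> bool" where
  "acyclic_graph G \<longleftrightarrow> \<not> (\<exists>vs. is_cycle G vs)"

definition subgraph_Knd :: "nat \<Rightarrow> nat \<Rightarrow> graph \<Rightarrow> bool" where
  "subgraph_Knd n d G \<longleftrightarrow> G \<subseteq> {1..n} \<times> {1..d}"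

definition spanning_tree :: "nat \<Rightarrow> nat \<Rightarrow> graph \<Rightarrow> bool" where
  "spanning_tree n d G \<longleftrightarrow> subgraph_Knd n d G \<and> acyclic_graph G \<and>
     (\<forall>u \<in> verts n d. \<forall>v \<in> verts n d. conn G u v)"

definition degree :: "graph \<Rightarrow> vert \<Rightarrow> nat" where
  "degree G v = card {w. (v, w) \<in> adj G}"

definition is_leaf :: "graph \<Rightarrow> vert \<Rightarrow> bool" where
  "is_leaf G v \<longleftrightarrow> degree G v = 1"

definition perfect_matching :: "graph \<Rightarrow> nat set \<Rightarrow> nat set \<Rightarrow> bool" where
  "perfect_matching M I J \<longleftrightarrow> M \<subseteq> I \<times> J \<and>
     (\<forall>i \<in> I. \<exists>!j. (i, j) \<in> M) \<and> (\<forall>j \<in> J. \<exists>!i. (i, j) \<in> M)"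

definition compatible :: "nat \<Rightarrow> nat \<Rightarrow> graph \<Rightarrow> graph \<Rightarrow> bool" where
  "compatible n d G G' \<longleftrightarrow>
     (\<forall>I J M M'. I \<subseteq> {1..n} \<longrightarrow> J \<subseteq> {1..d} \<longrightarrow>
        M \<subseteq> G \<longrightarrow> perfect_matching M I J \<longrightarrow>
        M' \<subseteq> G' \<longrightarrow> perfect_matching M' I J \<longrightarrow> M = M')"

definition encodes_fmsd :: "nat \<Rightarrow> nat \<Rightarrow> graph set \<Rightarrow> bool" where
  "encodes_fmsd n d \<G> \<longleftrightarrow>
     (\<forall>G \<in> \<G>. spanning_tree n d G) \<and>
     (\<forall>G \<in> \<G>. \<forall>e \<in> G. \<not> is_leaf G (Lv (fst e)) \<and> \<not> is_leaf G (Rv (snd e)) \<longrightarrow>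
        (\<exists>G' \<in> \<G>. G' \<noteq> G \<and> (\<exists>e' \<in> G'. G - {e} = G' - {e'}))) \<and>
     (\<forall>G \<in> \<G>. \<forall>G' \<in> \<G>. compatible n d G G')"

definition RD :: "graph \<Rightarrow> nat \<Rightarrow> nat" where
  "RD G j = card {i. (i, j) \<in> G}"

text \<open>Lattice points of k\<Delta>^{d-1}: nonnegative integer vectors indexed by 1..d with sum k.\<close>
definition lattice_pt :: "nat \<Rightarrow> nat \<Rightarrow> (nat \<Rightarrow> nat) \<Rightarrow> bool" where
  "lattice_pt d k u \<longleftrightarrow> (\<forall>j. j \<notin> {1..d} \<longrightarrow> u j = 0) \<and> (\<Sum>j\<in>{1..d}. u j) = k"

definition plus_e :: "(nat \<Rightarrow> nat) \<Rightarrow> nat \<Rightarrow> nat \<Rightarrow> nat" where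
  "plus_e t j = (\<lambda>j'. t j' + (if j' = j then 1 else 0))"

definition has_RD :: "nat \<Rightarrow> graph \<Rightarrow> (nat \<Rightarrow> nat) \<Rightarrow> bool" where
  "has_RD d G u \<longleftrightarrow> (\<forall>j \<in> {1..d}. RD G j = u j + 1)"

text \<open>\<T>(u): the unique tree of the collection with RD = u + 1.\<close>
definition TT :: "nat \<Rightarrow> graph set \<Rightarrow> (nat \<Rightarrow> nat) \<Rightarrow> graph" where
  "TT d \<G> u = (THE G. G \<in> \<G> \<and> has_RD d G u)"

text \<open>Edge of the tree-linkage graph \<G>(t) between j and j' with near label i at j and i' at j'.\<close>
definition linkage_edge :: "nat \<Rightarrow> graph set \<Rightarrow> (nat \<Rightarrow> nat) \<Rightarrow> nat \<Rightarrow> nat \<Rightarrow> nat \<Rightarrow> nat \<Rightarrow> bool" where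
  "linkage_edge d \<G> t j j' i i' \<longleftrightarrow> j \<in> {1..d} \<and> j' \<in> {1..d} \<and> j \<noteq> j' \<and>
     TT d \<G> (plus_e t j) - TT d \<G> (plus_e t j') = {(i, j)} \<and>
     TT d \<G> (plus_e t j') - TT d \<G> (plus_e t j) = {(i', j')}"

definition T_t :: "nat \<Rightarrow> graph set \<Rightarrow> (nat \<Rightarrow> nat) \<Rightarrow> graph" where
  "T_t d \<G> t = (\<Inter>j \<in> {1..d}. TT d \<G> (plus_e t j))"

end

theory Submission
  imports Defs "HOL-Library.Transitive_Closure_Table"
begin


lemma adj_sym: "(u, v) \<in> adj G \<Longrightarrow> (v, u) \<in> adj G"
  unfolding adj_def by blast

lemma conn_refl[simp]: "conn G u u"
  unfolding conn_def by simp

lemma conn_trans: "conn G u v \<Longrightarrow> conn G v w \<Longrightarrow> conn G u w"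
  unfolding conn_def by (rule rtrancl_trans)

lemma conn_sym: "conn G u v \<Longrightarrow> conn G v u"
  unfolding conn_def
proof (induction rule: rtrancl_induct)
  case base then show ?case by simp
next
  case (step y z)
  show ?case by (rule converse_rtrancl_into_rtrancl[OF adj_sym[OF step(2)] step(3)])
qed

lemma conn_mono: "conn G u v \<Longrightarrow> G \<subseteq> H \<Longrightarrow> conn H u v"
  unfolding conn_def
proof -
  assume a: "(u, v) \<in> (adj G)\<^sup>*" and s: "G \<subseteq> H"
  have "adj G \<subseteq> adj H" using s unfolding adj_def by blast
  then show "(u, v) \<in> (adj H)\<^sup>*" using a rtrancl_mono by blast
qed

lemma conn_edge: "(a, b) \<in> G \<Longrightarrow> conn G (Lv a) (Rv b)"
  unfolding conn_def adj_def by blast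

lemma conn_edge': "(a, b) \<in> G \<Longrightarrow> conn G (Rv b) (Lv a)"
  unfolding conn_def adj_def by blast

lemma adj_cases: "(x, y) \<in> adj G \<Longrightarrow> (\<exists>a b. x = Lv a \<and> y = Rv b \<and> (a,b) \<in> G) \<or> (\<exists>a b. x = Rv b \<and> y = Lv a \<and> (a,b) \<in> G)"
  unfolding adj_def by blast

lemma path_conn_all:
  "rtrancl_path r x xs y \<Longrightarrow> \<forall>w \<in> set (x # xs). r\<^sup>*\<^sup>* x w \<and> r\<^sup>*\<^sup>* w y"
proof (induction rule: rtrancl_path.induct)
  case (base x) then show ?case by simp
next
  case (step x y ys z)
  then show ?case
  proof (intro ballI)
    fix w assume "w \<in> set (x # y # ys)"
    then have "w = x \<or> w \<in> set (y # ys)" by simp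
    then show "r\<^sup>*\<^sup>* x w \<and> r\<^sup>*\<^sup>* w z"
    proof
      assume "w = x"
      moreover have "r\<^sup>*\<^sup>* y z" using step.IH by simp
      ultimately show ?thesis using step.hyps(1) by (simp add: converse_rtranclp_into_rtranclp)
    next
      assume "w \<in> set (y # ys)"
      then have "r\<^sup>*\<^sup>* y w \<and> r\<^sup>*\<^sup>* w z" using step.IH by blast
      then show ?thesis using step.hyps(1) by (simp add: converse_rtranclp_into_rtranclp)
    qed
  qed
qed

lemma conn_p: "conn H u v \<longleftrightarrow> (\<lambda>x y. (x, y) \<in> adj H)\<^sup>*\<^sup>* u v"
  unfolding conn_def by (simp add: rtranclp_rtrancl_eq)

lemma simple_path:
  assumes "conn H u v"
  shows "\<exists>ps. ps \<noteq> [] \<and> hd ps = u \<and> last ps = v \<and> distinct ps \<and>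
     (\<forall>k < length ps - 1. (ps!k, ps!Suc k) \<in> adj H) \<and> (\<forall>w \<in> set ps. conn H u w \<and> conn H w v)"
proof -
  let ?r = "\<lambda>x y. (x, y) \<in> adj H"
  have "?r\<^sup>*\<^sup>* u v" using assms conn_p by blast
  then have "\<exists>xs. rtrancl_path ?r u xs v" by (simp only: rtranclp_eq_rtrancl_path)
  then obtain xs where "rtrancl_path ?r u xs v" ..
  then obtain xs' where p: "rtrancl_path ?r u xs' v" and d: "distinct (u # xs')"
    by (rule rtrancl_path_distinct)
  have l: "last (u # xs') = v"
  proof (cases "xs' = []")
    case True
    have "u = v" using p unfolding True by (rule rtrancl_path.cases) simp_all
    then show ?thesis using True by simp
  next
    case False then show ?thesis using rtrancl_path_last[OF p] by simp
  qed
  have st: "\<forall>k < length (u # xs') - 1. ((u # xs')!k, (u # xs')!Suc k) \<in> adj H"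
  proof (intro allI impI)
    fix k assume "k < length (u # xs') - 1"
    then have "k < length xs'" by simp
    from rtrancl_path_nth[OF p this] show "((u # xs')!k, (u # xs')!Suc k) \<in> adj H" by simp
  qed
  have c0: "\<forall>w \<in> set (u # xs'). ?r\<^sup>*\<^sup>* u w \<and> ?r\<^sup>*\<^sup>* w v"
    by (rule path_conn_all[OF p])
  have c: "\<forall>w \<in> set (u # xs'). conn H u w \<and> conn H w v"
    using c0 conn_p by blast
  show ?thesis
    apply (rule exI[of _ "u # xs'"]) using l st c d by simp
qed



lemma adj_LR[simp]: "(Lv a, Rv b) \<in> adj G \<longleftrightarrow> (a, b) \<in> G"
  unfolding adj_def by blast
lemma adj_RL[simp]: "(Rv b, Lv a) \<in> adj G \<longleftrightarrow> (a, b) \<in> G"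
  unfolding adj_def by blast
lemma adj_LL[simp]: "(Lv a, Lv b) \<notin> adj G"
  unfolding adj_def by blast
lemma adj_RR[simp]: "(Rv a, Rv b) \<notin> adj G"
  unfolding adj_def by blast
lemma adj_mono: "G \<subseteq> H \<Longrightarrow> adj G \<subseteq> adj H"
  unfolding adj_def by blast

lemma BT:
  assumes st: "spanning_tree n d T" and e: "(a, b) \<in> T"
  shows "\<not> conn (T - {(a, b)}) (Lv a) (Rv b)"
proof
  assume "conn (T - {(a, b)}) (Lv a) (Rv b)"
  from simple_path[OF this] obtain ps where ne: "ps \<noteq> []" and h: "hd ps = Lv a" and l: "last ps = Rv b"
    and dps: "distinct ps" and stp: "\<forall>k < length ps - 1. (ps!k, ps!Suc k) \<in> adj (T - {(a, b)})"
    by blast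
  have l2: "length ps \<ge> 2"
  proof (rule ccontr)
    assume "\<not> length ps \<ge> 2"
    moreover have "length ps \<noteq> 0" using ne by simp
    ultimately have "length ps = 1" by linarith
    then obtain x where "ps = [x]" by (metis length_0_conv length_Suc_conv One_nat_def)
    then have "hd ps = last ps" by simp
    with h l show False by simp
  qed
  have l3: "length ps \<ge> 3"
  proof (rule ccontr)
    assume "\<not> length ps \<ge> 3"
    with l2 have len: "length ps = 2" by simp
    have "ps ! 0 = Lv a" using h ne by (simp add: hd_conv_nth)
    moreover have "ps ! 1 = Rv b" using l ne len by (simp add: last_conv_nth)
    moreover have "(ps!0, ps!Suc 0) \<in> adj (T - {(a, b)})" using stp len by simp
    ultimately show False by simp
  qed
  have "is_cycle T ps"
    unfolding is_cycle_def
  proof (intro conjI allI impI)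
    show "3 \<le> length ps" by (rule l3)
    show "distinct ps" by (rule dps)
    fix k assume "k < length ps - 1"
    then have "(ps!k, ps!Suc k) \<in> adj (T - {(a, b)})" using stp by blast
    then show "(ps!k, ps!Suc k) \<in> adj T" using adj_mono[of "T - {(a,b)}" T] by blast
  next
    show "(last ps, hd ps) \<in> adj T" using h l e by simp
  qed
  then show False using st unfolding spanning_tree_def acyclic_graph_def by blast
qed

lemma SP:
  assumes c: "conn H u v" and e: "(a, b) \<in> H" and nc: "\<not> conn H u (Rv b)"
  shows "conn (H - {(a, b)}) u v"
proof -
  have nc2: "\<not> conn H u (Lv a)"
    using nc conn_trans[OF _ conn_edge[OF e]] by blast
  have "(u, v) \<in> (adj H)\<^sup>*" using c unfolding conn_def .
  then show ?thesis
  proof (induction rule: rtrancl_induct)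
    case base then show ?case by simp
  next
    case (step x y)
    have cx: "conn H u x" using step.hyps(1) unfolding conn_def .
    then have xa: "x \<noteq> Lv a" and xb: "x \<noteq> Rv b" using nc nc2 by auto
    have "(x, y) \<in> adj (H - {(a, b)})"
      using adj_cases[OF step.hyps(2)] xa xb by auto
    then show ?case using step.IH unfolding conn_def by (rule rtrancl_into_rtrancl[rotated])
  qed
qed

lemma CL:
  assumes st: "spanning_tree n d T" and e: "(a, b) \<in> T" and v: "v \<in> verts n d"
  shows "conn (T - {(a, b)}) (Lv a) v \<or> conn (T - {(a, b)}) (Rv b) v"
proof -
  have "b \<in> {1..d}" using st e unfolding spanning_tree_def subgraph_Knd_def by blast
  then have "Rv b \<in> verts n d" unfolding verts_def by blast
  then have "conn T (Rv b) v" using st v unfolding spanning_tree_def by blast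
  then have "(Rv b, v) \<in> (adj T)\<^sup>*" unfolding conn_def .
  then show ?thesis
  proof (induction rule: rtrancl_induct)
    case base then show ?case by simp
  next
    case (step x y)
    show ?case
    proof (cases "(x, y) \<in> adj (T - {(a, b)})")
      case True
      then show ?thesis using step.IH unfolding conn_def
        by (meson rtrancl.rtrancl_into_rtrancl)
    next
      case False
      then have "y = Lv a \<or> y = Rv b" using adj_cases[OF step.hyps(2)] by auto
      then show ?thesis by auto
    qed
  qed
qed



definition Sst :: "graph \<Rightarrow> graph \<Rightarrow> vert \<Rightarrow> vert \<Rightarrow> bool" where
  "Sst G1 G2 u w \<longleftrightarrow> (\<exists>a b. u = Lv a \<and> w = Rv b \<and> (a,b) \<in> G1) \<or> (\<exists>a b. u = Rv b \<and> w = Lv a \<and> (a,b) \<in> G2)"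

definition nxt :: "vert list \<Rightarrow> nat \<Rightarrow> nat" where
  "nxt cs k = (if Suc k = length cs then 0 else Suc k)"

definition Mf :: "vert list \<Rightarrow> graph" where
  "Mf cs = {(a,b). \<exists>k<length cs. cs!k = Lv a \<and> cs!(nxt cs k) = Rv b}"

definition Mf' :: "vert list \<Rightarrow> graph" where
  "Mf' cs = {(a,b). \<exists>k<length cs. cs!k = Rv b \<and> cs!(nxt cs k) = Lv a}"

lemma nxt_lt: "k < length cs \<Longrightarrow> nxt cs k < length cs"
  unfolding nxt_def by auto

lemma nxt_inj: "k < length cs \<Longrightarrow> k' < length cs \<Longrightarrow> nxt cs k = nxt cs k' \<Longrightarrow> k = k'"
  unfolding nxt_def by (auto split: if_splits)


lemma nxt_surj2: "j < length cs \<Longrightarrow> \<exists>k<length cs. nxt cs k = j"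
proof -
  assume j: "j < length cs"
  show ?thesis
  proof (cases j)
    case 0
    then show ?thesis using j by (intro exI[of _ "length cs - 1"]) (auto simp: nxt_def)
  next
    case (Suc p)
    then show ?thesis using j by (intro exI[of _ p]) (auto simp: nxt_def)
  qed
qed

lemma Sst_L: "Sst G1 G2 (Lv a) w \<Longrightarrow> \<exists>b. w = Rv b \<and> (a, b) \<in> G1"
  unfolding Sst_def by auto
lemma Sst_R: "Sst G1 G2 (Rv b) w \<Longrightarrow> \<exists>a. w = Lv a \<and> (a, b) \<in> G2"
  unfolding Sst_def by auto
lemma Sst_toR: "Sst G1 G2 u (Rv b) \<Longrightarrow> \<exists>a. u = Lv a \<and> (a, b) \<in> G1"
  unfolding Sst_def by auto
lemma Sst_toL: "Sst G1 G2 u (Lv a) \<Longrightarrow> \<exists>b. u = Rv b \<and> (a, b) \<in> G2"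
  unfolding Sst_def by auto

lemma cyc_match:
  assumes dist: "distinct cs"
    and stp: "\<forall>k<length cs. Sst G1 G2 (cs!k) (cs!(nxt cs k))"
  shows "perfect_matching (Mf cs) {a. Lv a \<in> set cs} {b. Rv b \<in> set cs}
       \<and> perfect_matching (Mf' cs) {a. Lv a \<in> set cs} {b. Rv b \<in> set cs}
       \<and> Mf cs \<subseteq> G1 \<and> Mf' cs \<subseteq> G2"
proof (intro conjI)
  have sk: "\<And>k. k < length cs \<Longrightarrow> Sst G1 G2 (cs!k) (cs!(nxt cs k))" using stp by blast
  have idx: "\<And>k k'. k < length cs \<Longrightarrow> k' < length cs \<Longrightarrow> cs!k = cs!k' \<Longrightarrow> k = k'"
    using dist nth_eq_iff_index_eq by blast
  show "Mf cs \<subseteq> G1"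
  proof
    fix e assume "e \<in> Mf cs"
    then obtain a b k where e: "e = (a,b)" and k: "k < length cs" and "cs!k = Lv a" "cs!(nxt cs k) = Rv b"
      unfolding Mf_def by blast
    then have "Sst G1 G2 (Lv a) (Rv b)" using sk[OF k] by simp
    then show "e \<in> G1" using e unfolding Sst_def by simp
  qed
  show "Mf' cs \<subseteq> G2"
  proof
    fix e assume "e \<in> Mf' cs"
    then obtain a b k where e: "e = (a,b)" and k: "k < length cs" and "cs!k = Rv b" "cs!(nxt cs k) = Lv a"
      unfolding Mf'_def by blast
    then have "Sst G1 G2 (Rv b) (Lv a)" using sk[OF k] by simp
    then show "e \<in> G2" using e unfolding Sst_def by simp
  qed
  show "perfect_matching (Mf cs) {a. Lv a \<in> set cs} {b. Rv b \<in> set cs}"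
    unfolding perfect_matching_def
  proof (intro conjI ballI)
    show "Mf cs \<subseteq> {a. Lv a \<in> set cs} \<times> {b. Rv b \<in> set cs}"
    proof
      fix e assume "e \<in> Mf cs"
      then obtain a b k where e: "e = (a,b)" and k: "k < length cs" and x: "cs!k = Lv a" "cs!(nxt cs k) = Rv b"
        unfolding Mf_def by blast
      have "cs!k \<in> set cs" "cs!(nxt cs k) \<in> set cs" using k nxt_lt[OF k] by (simp_all add: nth_mem)
      then show "e \<in> {a. Lv a \<in> set cs} \<times> {b. Rv b \<in> set cs}" using e x by simp
    qed
  next
    fix a assume "a \<in> {a. Lv a \<in> set cs}"
    then obtain k where k: "k < length cs" and ck: "cs!k = Lv a" by (auto simp: in_set_conv_nth)
    have "Sst G1 G2 (Lv a) (cs!(nxt cs k))" using sk[OF k] ck by simp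
    from Sst_L[OF this] obtain b where b: "cs!(nxt cs k) = Rv b" by blast
    show "\<exists>!b. (a, b) \<in> Mf cs"
    proof (rule ex1I[of _ b])
      show "(a, b) \<in> Mf cs" unfolding Mf_def using k ck b by blast
    next
      fix b' assume "(a, b') \<in> Mf cs"
      then obtain k' where k': "k' < length cs" "cs!k' = Lv a" "cs!(nxt cs k') = Rv b'"
        unfolding Mf_def by blast
      then have "k' = k" using idx[OF k'(1) k] ck by simp
      then show "b' = b" using k' b by simp
    qed
  next
    fix b assume "b \<in> {b. Rv b \<in> set cs}"
    then obtain k where k: "k < length cs" and ck: "cs!k = Rv b" by (auto simp: in_set_conv_nth)
    obtain p where p: "p < length cs" "nxt cs p = k" using nxt_surj2[OF k] by blast
    have "Sst G1 G2 (cs!p) (Rv b)" using sk[OF p(1)] p(2) ck by simp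
    from Sst_toR[OF this] obtain a where a: "cs!p = Lv a" by blast
    show "\<exists>!a. (a, b) \<in> Mf cs"
    proof (rule ex1I[of _ a])
      show "(a, b) \<in> Mf cs" unfolding Mf_def using p ck a by blast
    next
      fix a' assume "(a', b) \<in> Mf cs"
      then obtain k' where k': "k' < length cs" "cs!k' = Lv a'" "cs!(nxt cs k') = Rv b"
        unfolding Mf_def by blast
      then have "nxt cs k' = k" using idx[OF nxt_lt[OF k'(1)] k] ck by simp
      then have "k' = p" using nxt_inj[OF k'(1) p(1)] p(2) by simp
      then show "a' = a" using k' a by simp
    qed
  qed
  show "perfect_matching (Mf' cs) {a. Lv a \<in> set cs} {b. Rv b \<in> set cs}"
    unfolding perfect_matching_def
  proof (intro conjI ballI)
    show "Mf' cs \<subseteq> {a. Lv a \<in> set cs} \<times> {b. Rv b \<in> set cs}"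
    proof
      fix e assume "e \<in> Mf' cs"
      then obtain a b k where e: "e = (a,b)" and k: "k < length cs" and x: "cs!k = Rv b" "cs!(nxt cs k) = Lv a"
        unfolding Mf'_def by blast
      have "cs!k \<in> set cs" "cs!(nxt cs k) \<in> set cs" using k nxt_lt[OF k] by (simp_all add: nth_mem)
      then show "e \<in> {a. Lv a \<in> set cs} \<times> {b. Rv b \<in> set cs}" using e x by simp
    qed
  next
    fix b assume "b \<in> {b. Rv b \<in> set cs}"
    then obtain k where k: "k < length cs" and ck: "cs!k = Rv b" by (auto simp: in_set_conv_nth)
    have "Sst G1 G2 (Rv b) (cs!(nxt cs k))" using sk[OF k] ck by simp
    from Sst_R[OF this] obtain a where a: "cs!(nxt cs k) = Lv a" by blast
    show "\<exists>!a. (a, b) \<in> Mf' cs"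
    proof (rule ex1I[of _ a])
      show "(a, b) \<in> Mf' cs" unfolding Mf'_def using k ck a by blast
    next
      fix a' assume "(a', b) \<in> Mf' cs"
      then obtain k' where k': "k' < length cs" "cs!k' = Rv b" "cs!(nxt cs k') = Lv a'"
        unfolding Mf'_def by blast
      then have "k' = k" using idx[OF k'(1) k] ck by simp
      then show "a' = a" using k' a by simp
    qed
  next
    fix a assume "a \<in> {a. Lv a \<in> set cs}"
    then obtain k where k: "k < length cs" and ck: "cs!k = Lv a" by (auto simp: in_set_conv_nth)
    obtain p where p: "p < length cs" "nxt cs p = k" using nxt_surj2[OF k] by blast
    have "Sst G1 G2 (cs!p) (Lv a)" using sk[OF p(1)] p(2) ck by simp
    from Sst_toL[OF this] obtain b where b: "cs!p = Rv b" by blast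
    show "\<exists>!b. (a, b) \<in> Mf' cs"
    proof (rule ex1I[of _ b])
      show "(a, b) \<in> Mf' cs" unfolding Mf'_def using p ck b by blast
    next
      fix b' assume "(a, b') \<in> Mf' cs"
      then obtain k' where k': "k' < length cs" "cs!k' = Rv b'" "cs!(nxt cs k') = Lv a"
        unfolding Mf'_def by blast
      then have "nxt cs k' = k" using idx[OF nxt_lt[OF k'(1)] k] ck by simp
      then have "k' = p" using nxt_inj[OF k'(1) p(1)] p(2) by simp
      then show "b' = b" using k' b by simp
    qed
  qed
qed



lemma adjS: "(u, w) \<in> adj F \<Longrightarrow> F \<subseteq> G1 \<Longrightarrow> F \<subseteq> G2 \<Longrightarrow> Sst G1 G2 u w"
  unfolding Sst_def using adj_cases by blast

lemma L1:
  assumes st1: "spanning_tree n d G1" and st2: "spanning_tree n d G2"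
    and cp: "compatible n d G1 G2"
    and e1: "(i, j) \<in> G1" and e2: "(i', j') \<in> G2"
    and F1: "G1 - {(i, j)} = F" and F2: "G2 - {(i', j')} = F"
    and n2: "(i, j) \<notin> G2" and jj: "j \<noteq> j'"
  shows "\<not> conn F (Rv j) (Rv j')"
proof
  assume c: "conn F (Rv j) (Rv j')"
  have bt1: "\<not> conn F (Lv i) (Rv j)" using BT[OF st1 e1] F1 by simp
  have bt2: "\<not> conn F (Lv i') (Rv j')" using BT[OF st2 e2] F2 by simp
  have "i' \<in> {1..n}" using st2 e2 unfolding spanning_tree_def subgraph_Knd_def by blast
  then have "Lv i' \<in> verts n d" unfolding verts_def by blast
  from CL[OF st1 e1 this] F1 have "conn F (Lv i) (Lv i') \<or> conn F (Rv j) (Lv i')" by simp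
  moreover have "\<not> conn F (Rv j) (Lv i')"
  proof
    assume "conn F (Rv j) (Lv i')"
    then have "conn F (Lv i') (Rv j')" using c conn_sym conn_trans by blast
    with bt2 show False by simp
  qed
  ultimately have c2: "conn F (Lv i') (Lv i)" using conn_sym by blast
  from simple_path[OF c] obtain P1 where ne1: "P1 \<noteq> []" and h1: "hd P1 = Rv j" and l1: "last P1 = Rv j'"
    and d1: "distinct P1" and s1: "\<forall>k < length P1 - 1. (P1!k, P1!Suc k) \<in> adj F"
    and w1: "\<forall>w \<in> set P1. conn F (Rv j) w \<and> conn F w (Rv j')" by blast
  from simple_path[OF c2] obtain P2 where ne2: "P2 \<noteq> []" and h2: "hd P2 = Lv i'" and l2: "last P2 = Lv i"
    and d2: "distinct P2" and s2: "\<forall>k < length P2 - 1. (P2!k, P2!Suc k) \<in> adj F"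
    and w2: "\<forall>w \<in> set P2. conn F (Lv i') w \<and> conn F w (Lv i)" by blast
  define cs where "cs = P1 @ P2"
  have disj: "set P1 \<inter> set P2 = {}"
  proof (rule ccontr)
    assume "set P1 \<inter> set P2 \<noteq> {}"
    then obtain w where "w \<in> set P1" "w \<in> set P2" by blast
    then have "conn F (Rv j) w" "conn F w (Lv i)" using w1 w2 by auto
    then have "conn F (Lv i) (Rv j)" using conn_trans conn_sym by blast
    with bt1 show False by simp
  qed
  have dcs: "distinct cs" unfolding cs_def using d1 d2 disj by simp
  have FG1: "F \<subseteq> G1" using F1 by blast
  have FG2: "F \<subseteq> G2" using F2 by blast
  have Pn1: "P1 ! (length P1 - 1) = Rv j'" using l1 ne1 by (simp add: last_conv_nth)
  have Pn2: "P2 ! (length P2 - 1) = Lv i" using l2 ne2 by (simp add: last_conv_nth)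
  have P01: "P1 ! 0 = Rv j" using h1 ne1 by (simp add: hd_conv_nth)
  have P02: "P2 ! 0 = Lv i'" using h2 ne2 by (simp add: hd_conv_nth)
  have lp1: "length P1 \<ge> 1" and lp2: "length P2 \<ge> 1" using ne1 ne2 by (auto simp: Suc_le_eq)
  have lcs: "length cs = length P1 + length P2" unfolding cs_def by simp
  have stp: "\<forall>k<length cs. Sst G1 G2 (cs!k) (cs!(nxt cs k))"
  proof (intro allI impI)
    fix k assume k: "k < length cs"
    consider (a) "Suc k < length P1" | (b) "Suc k = length P1" | (c) "length P1 \<le> k \<and> Suc k < length cs"
      | (d) "Suc k = length cs" using k lcs by linarith
    then show "Sst G1 G2 (cs!k) (cs!(nxt cs k))"
    proof cases
      case a
      then have "Suc k \<noteq> length cs" using lcs lp2 by linarith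
      then have "nxt cs k = Suc k" by (simp add: nxt_def)
      moreover have "cs!k = P1!k" "cs!Suc k = P1!Suc k" using a unfolding cs_def by (auto simp: nth_append)
      moreover have "(P1!k, P1!Suc k) \<in> adj F" using s1 a by simp
      ultimately show ?thesis using adjS FG1 FG2 by metis
    next
      case b
      then have "Suc k \<noteq> length cs" using lcs lp2 by linarith
      then have "nxt cs k = Suc k" by (simp add: nxt_def)
      moreover have "cs!k = Rv j'"
      proof -
        have "k < length P1" "k = length P1 - 1" using b by auto
        then show ?thesis using Pn1 unfolding cs_def by (simp add: nth_append)
      qed
      moreover have "cs!Suc k = Lv i'" using b P02 unfolding cs_def by (auto simp: nth_append)
      ultimately show ?thesis using e2 unfolding Sst_def by auto
    next
      case c
      then have "nxt cs k = Suc k" by (simp add: nxt_def)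
      moreover have "cs!k = P2!(k - length P1)" "cs!Suc k = P2!Suc (k - length P1)"
        using c unfolding cs_def by (auto simp: nth_append Suc_diff_le)
      moreover have "(P2!(k - length P1), P2!Suc (k - length P1)) \<in> adj F" using s2 c lcs by auto
      ultimately show ?thesis using adjS FG1 FG2 by metis
    next
      case d
      then have "nxt cs k = 0" by (simp add: nxt_def)
      moreover have "cs!k = Lv i"
      proof -
        have "\<not> k < length P1" "k - length P1 = length P2 - 1" using d lcs lp2 by auto
        then show ?thesis using Pn2 unfolding cs_def by (simp add: nth_append)
      qed
      moreover have "cs!0 = Rv j" using P01 lp1 unfolding cs_def by (auto simp: nth_append)
      ultimately show ?thesis using e1 unfolding Sst_def by auto
    qed
  qed
  note cm = cyc_match[OF dcs stp]
  let ?I = "{a. Lv a \<in> set cs}" and ?J = "{b. Rv b \<in> set cs}"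
  have sub1: "G1 \<subseteq> {1..n} \<times> {1..d}" using st1 unfolding spanning_tree_def subgraph_Knd_def by blast
  have I: "?I \<subseteq> {1..n}"
  proof
    fix a assume "a \<in> ?I"
    then obtain b where "(a, b) \<in> Mf cs" using cm unfolding perfect_matching_def by blast
    then show "a \<in> {1..n}" using cm sub1 by blast
  qed
  have J: "?J \<subseteq> {1..d}"
  proof
    fix b assume "b \<in> ?J"
    then obtain a where "(a, b) \<in> Mf cs" using cm unfolding perfect_matching_def by blast
    then show "b \<in> {1..d}" using cm sub1 by blast
  qed
  have eq: "Mf cs = Mf' cs"
    using cp I J cm unfolding compatible_def by blast
  have "(i, j) \<in> Mf cs"
  proof -
    have k: "length cs - 1 < length cs" using lcs lp1 by simp
    have "nxt cs (length cs - 1) = 0" using lcs lp1 by (simp add: nxt_def)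
    moreover have "cs!(length cs - 1) = Lv i"
    proof -
      have "\<not> length cs - 1 < length P1" "length cs - 1 - length P1 = length P2 - 1" using lcs lp2 by auto
      then show ?thesis using Pn2 unfolding cs_def by (simp add: nth_append)
    qed
    moreover have "cs!0 = Rv j" using P01 lp1 unfolding cs_def by (auto simp: nth_append)
    ultimately show ?thesis unfolding Mf_def using k by auto
  qed
  then have "(i, j) \<in> G2" using eq cm by blast
  with n2 show False by simp
qed



lemma TT_in:
  assumes n2: "n \<ge> 2" and t: "lattice_pt d (n - 2) t" and j: "j \<in> {1..d}"
    and ku: "\<forall>u. lattice_pt d (n - 1) u \<longrightarrow> (\<exists>!G. G \<in> \<G> \<and> has_RD d G u)"
  shows "TT d \<G> (plus_e t j) \<in> \<G>"
proof -
  have "lattice_pt d (n - 1) (plus_e t j)"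
    unfolding lattice_pt_def
  proof (intro conjI allI impI)
    fix j' assume "j' \<notin> {1..d}"
    then show "plus_e t j j' = 0" using t j unfolding lattice_pt_def plus_e_def by auto
  next
    have "(\<Sum>j'\<in>{1..d}. plus_e t j j') = (\<Sum>j'\<in>{1..d}. t j') + (\<Sum>j'\<in>{1..d}. (if j' = j then 1 else 0))"
      unfolding plus_e_def by (simp add: sum.distrib)
    also have "\<dots> = (n - 2) + 1" using t j unfolding lattice_pt_def by simp
    also have "\<dots> = n - 1" using n2 by simp
    finally show "(\<Sum>j'\<in>{1..d}. plus_e t j j') = n - 1" .
  qed
  then have "\<exists>!G. G \<in> \<G> \<and> has_RD d G (plus_e t j)" using ku by blast
  then have "TT d \<G> (plus_e t j) \<in> \<G> \<and> has_RD d (TT d \<G> (plus_e t j)) (plus_e t j)"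
    unfolding TT_def by (rule theI')
  then show ?thesis by blast
qed

theorem mainTheorem15:
  fixes n d :: nat and \<G> :: "graph set" and t :: "nat \<Rightarrow> nat"
    and L :: nat and js ii ii' :: "nat \<Rightarrow> nat"
  assumes "n \<ge> 2" and "d \<ge> 1"
    and enc: "encodes_fmsd n d \<G>"
    and known_unique: "\<forall>u. lattice_pt d (n - 1) u \<longrightarrow> (\<exists>!G. G \<in> \<G> \<and> has_RD d G u)"
    and known_all: "\<forall>G \<in> \<G>. \<exists>u. lattice_pt d (n - 1) u \<and> G = TT d \<G> u"
    and t: "lattice_pt d (n - 2) t"
    and l: "L \<ge> 1"
    and path_distinct: "inj_on js {0..L}"
    and path_edges: "\<forall>k < L. linkage_edge d \<G> t (js k) (js (Suc k)) (ii k) (ii' (Suc k))"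
  shows
    "(\<forall>k < L. \<forall>a \<le> k. \<forall>b. k < b \<and> b \<le> L \<longrightarrow>
        \<not> conn (TT d \<G> (plus_e t (js k)) - {(ii k, js k)}) (Rv (js a)) (Rv (js b)))
     \<and> (\<forall>k k'. 1 \<le> k \<and> k \<le> k' \<and> k' \<le> L - 1 \<longrightarrow> ii' k \<noteq> ii k')
     \<and> (\<forall>i k. k \<le> L \<and> (i, js k) \<in> T_t d \<G> t \<longrightarrow>
          (\<forall>k'. k \<le> k' \<and> k' \<le> L - 1 \<longrightarrow> ii k' \<noteq> i) \<and>
          (\<forall>k'. 1 \<le> k' \<and> k' \<le> k \<longrightarrow> ii' k' \<noteq> i))"
proof -
  define T where "T = (\<lambda>m. TT d \<G> (plus_e t (js m)))"
  define F where "F = (\<lambda>m. T m - {(ii m, js m)})"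
  have Fdef: "\<And>k. TT d \<G> (plus_e t (js k)) - {(ii k, js k)} = F k" unfolding F_def T_def by simp
  have jsd: "\<And>m. m \<le> L \<Longrightarrow> js m \<in> {1..d}"
  proof -
    fix m assume m: "m \<le> L"
    show "js m \<in> {1..d}"
    proof (cases "m < L")
      case True then show ?thesis using path_edges unfolding linkage_edge_def by blast
    next
      case False
      then have "m = Suc (L - 1)" using m l by simp
      moreover have "L - 1 < L" using l by simp
      ultimately show ?thesis using path_edges unfolding linkage_edge_def by metis
    qed
  qed
  have TG: "\<And>m. m \<le> L \<Longrightarrow> T m \<in> \<G>"
    unfolding T_def using TT_in[OF assms(1) t _ known_unique] jsd by blast
  have E1: "\<forall>G\<in>\<G>. spanning_tree n d G" using enc[unfolded encodes_fmsd_def] by (rule conjunct1)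
  have E3: "\<forall>G\<in>\<G>. \<forall>G'\<in>\<G>. compatible n d G G'"
    using enc[unfolded encodes_fmsd_def] by (rule conjunct2[THEN conjunct2])
  have ST: "\<And>m. m \<le> L \<Longrightarrow> spanning_tree n d (T m)"
    using TG E1 by blast
  have CP: "\<And>m m'. m \<le> L \<Longrightarrow> m' \<le> L \<Longrightarrow> compatible n d (T m) (T m')"
    using TG E3 by blast
  have jsinj: "\<And>m m'. m \<le> L \<Longrightarrow> m' \<le> L \<Longrightarrow> m \<noteq> m' \<Longrightarrow> js m \<noteq> js m'"
    using path_distinct unfolding inj_on_def by auto
  have lk1: "\<And>k. k < L \<Longrightarrow> T k - T (Suc k) = {(ii k, js k)}"
    using path_edges unfolding linkage_edge_def T_def by blast
  have lk2: "\<And>k. k < L \<Longrightarrow> T (Suc k) - T k = {(ii' (Suc k), js (Suc k))}"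
    using path_edges unfolding linkage_edge_def T_def by blast
  have e1: "\<And>k. k < L \<Longrightarrow> (ii k, js k) \<in> T k" using lk1 by blast
  have nin1: "\<And>k. k < L \<Longrightarrow> (ii k, js k) \<notin> T (Suc k)" using lk1 by blast
  have e2: "\<And>k. k < L \<Longrightarrow> (ii' (Suc k), js (Suc k)) \<in> T (Suc k)" using lk2 by blast
  have nin2: "\<And>k. k < L \<Longrightarrow> (ii' (Suc k), js (Suc k)) \<notin> T k" using lk2 by blast
  have F2: "\<And>k. k < L \<Longrightarrow> T (Suc k) - {(ii' (Suc k), js (Suc k))} = F k"
  proof -
    fix k assume k: "k < L"
    show "T (Suc k) - {(ii' (Suc k), js (Suc k))} = F k"
      using lk1[OF k] lk2[OF k] unfolding F_def by blast
  qed
  have L1k: "\<And>k. k < L \<Longrightarrow> \<not> conn (F k) (Rv (js k)) (Rv (js (Suc k)))"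
  proof -
    fix k assume k: "k < L"
    show "\<not> conn (F k) (Rv (js k)) (Rv (js (Suc k)))"
      by (rule L1[OF ST ST CP e1[OF k] e2[OF k] _ F2[OF k] nin1[OF k]])
         (use k jsinj in \<open>auto simp: F_def\<close>)
  qed
  have BTa: "\<And>k. k < L \<Longrightarrow> \<not> conn (F k) (Lv (ii k)) (Rv (js k))"
  proof -
    fix k assume k: "k < L"
    have "spanning_tree n d (T k)" using ST k by simp
    from BT[OF this e1[OF k]] show "\<not> conn (F k) (Lv (ii k)) (Rv (js k))" unfolding F_def .
  qed
  have BTb: "\<And>k. k < L \<Longrightarrow> \<not> conn (F k) (Lv (ii' (Suc k))) (Rv (js (Suc k)))"
  proof -
    fix k assume k: "k < L"
    show "\<not> conn (F k) (Lv (ii' (Suc k))) (Rv (js (Suc k)))"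
      using BT[OF ST e2[OF k]] F2[OF k] k by simp
  qed
  have D1: "\<And>k. k < L \<Longrightarrow> conn (F k) (Rv (js k)) (Lv (ii' (Suc k)))"
  proof -
    fix k assume k: "k < L"
    have "Rv (js k) \<in> verts n d" using jsd k unfolding verts_def by simp
    from CL[OF ST e2[OF k] this] k F2[OF k]
    have "conn (F k) (Lv (ii' (Suc k))) (Rv (js k)) \<or> conn (F k) (Rv (js (Suc k))) (Rv (js k))" by simp
    then show "conn (F k) (Rv (js k)) (Lv (ii' (Suc k)))" using L1k[OF k] conn_sym by blast
  qed
  have D2: "\<And>k. k < L \<Longrightarrow> conn (F k) (Rv (js (Suc k))) (Lv (ii k))"
  proof -
    fix k assume k: "k < L"
    have "Rv (js (Suc k)) \<in> verts n d" using jsd k unfolding verts_def by simp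
    from CL[OF ST e1[OF k] this] k
    have "conn (F k) (Lv (ii k)) (Rv (js (Suc k))) \<or> conn (F k) (Rv (js k)) (Rv (js (Suc k)))"
      unfolding F_def by simp
    then show "conn (F k) (Rv (js (Suc k))) (Lv (ii k))" using L1k[OF k] conn_sym by blast
  qed
  have neq: "\<And>p. Suc p < L \<Longrightarrow> ii' (Suc p) \<noteq> ii (Suc p)"
  proof
    fix p assume p: "Suc p < L" and eq: "ii' (Suc p) = ii (Suc p)"
    have FF: "F p = F (Suc p)" using F2[of p] p eq unfolding F_def by simp
    have jj: "js p \<noteq> js (Suc (Suc p))" using jsinj p by simp
    have "(ii p, js p) \<notin> T (Suc (Suc p))"
    proof
      assume a: "(ii p, js p) \<in> T (Suc (Suc p))"
      have "(ii p, js p) \<notin> F p" unfolding F_def by simp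
      then have "(ii p, js p) \<notin> T (Suc (Suc p)) - {(ii' (Suc (Suc p)), js (Suc (Suc p)))}"
        using F2[OF p] FF by simp
      with a jj show False by simp
    qed
    note n2 = this
    have pL: "p < L" "p \<le> L" "Suc (Suc p) \<le> L" using p by auto
    have sp1: "spanning_tree n d (T p)" using ST pL by simp
    have sp2: "spanning_tree n d (T (Suc (Suc p)))" using ST pL by simp
    have cp: "compatible n d (T p) (T (Suc (Suc p)))" using CP pL by simp
    have f1: "T p - {(ii p, js p)} = F p" by (simp add: F_def)
    have f2: "T (Suc (Suc p)) - {(ii' (Suc (Suc p)), js (Suc (Suc p)))} = F p" using F2[OF p] FF by simp
    have nc: "\<not> conn (F p) (Rv (js p)) (Rv (js (Suc (Suc p))))"
      by (rule L1[OF sp1 sp2 cp e1[OF pL(1)] e2[OF p] f1 f2 n2 jj])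
    have A: "conn (F p) (Rv (js p)) (Lv (ii (Suc p)))" using D1[OF pL(1)] eq by simp
    have B: "conn (F p) (Rv (js (Suc (Suc p)))) (Lv (ii (Suc p)))" using D2[OF p] FF by simp
    show False using nc conn_trans[OF A conn_sym[OF B]] by simp
  qed
  have step: "\<And>p v. Suc p < L \<Longrightarrow> conn (F p) (Rv (js p)) v \<Longrightarrow> conn (F (Suc p)) (Rv (js (Suc p))) v"
  proof -
    fix p v assume p: "Suc p < L" and c: "conn (F p) (Rv (js p)) v"
    let ?e = "(ii (Suc p), js (Suc p))" and ?e' = "(ii' (Suc p), js (Suc p))"
    have d1: "conn (F p) (Rv (js p)) (Lv (ii' (Suc p)))" using D1[of p] p by simp
    have c1: "conn (F p) (Lv (ii' (Suc p))) v" by (rule conn_trans[OF conn_sym[OF d1] c])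
    have ne: "?e \<noteq> ?e'" using neq[OF p] by simp
    have eF: "?e \<in> F p" using e1[OF p] F2[of p] p ne by auto
    have c2: "conn (F p - {?e}) (Lv (ii' (Suc p))) v"
      by (rule SP[OF c1 eF]) (use BTb[of p] p in simp)
    have "F p - {?e} \<subseteq> F (Suc p)" using F2[of p] p unfolding F_def by auto
    then have c3: "conn (F (Suc p)) (Lv (ii' (Suc p))) v" using c2 conn_mono by blast
    have "?e' \<in> F (Suc p)" using e2[of p] p ne unfolding F_def by auto
    then have "conn (F (Suc p)) (Rv (js (Suc p))) (Lv (ii' (Suc p)))" by (rule conn_edge')
    then show "conn (F (Suc p)) (Rv (js (Suc p))) v" using c3 conn_trans by blast
  qed
  have chain: "\<And>k m v. k \<le> m \<Longrightarrow> m < L \<Longrightarrow> conn (F k) (Rv (js k)) v \<Longrightarrow> conn (F m) (Rv (js m)) v"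
  proof -
    fix k m v assume km: "k \<le> m" and mL: "m < L" and c: "conn (F k) (Rv (js k)) v"
    show "conn (F m) (Rv (js m)) v" using km mL
    proof (induction m)
      case 0 then show ?case using c by simp
    next
      case (Suc m)
      show ?case
      proof (cases "k = Suc m")
        case True then show ?thesis using c by simp
      next
        case False
        then have "k \<le> m" using Suc.prems by simp
        then have "conn (F m) (Rv (js m)) v" using Suc by simp
        then show ?thesis using step Suc.prems by blast
      qed
    qed
  qed
  have notA: "\<And>k b. k < b \<Longrightarrow> b \<le> L \<Longrightarrow> \<not> conn (F k) (Rv (js k)) (Rv (js b))"
  proof
    fix k b assume kb: "k < b" "b \<le> L" and c: "conn (F k) (Rv (js k)) (Rv (js b))"
    have "b - 1 < L" "Suc (b - 1) = b" using kb by auto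
    then have "conn (F (b - 1)) (Rv (js (b - 1))) (Rv (js b))" using chain[of k "b - 1"] kb c by simp
    with L1k[of "b - 1"] \<open>b - 1 < L\<close> \<open>Suc (b - 1) = b\<close> show False by simp
  qed
  have partA: "\<forall>k < L. \<forall>a \<le> k. \<forall>b. k < b \<and> b \<le> L \<longrightarrow> \<not> conn (F k) (Rv (js a)) (Rv (js b))"
  proof (intro allI impI notI)
    fix k a b assume k: "k < L" and a: "a \<le> k" and b: "k < b \<and> b \<le> L"
      and c: "conn (F k) (Rv (js a)) (Rv (js b))"
    have "conn (F k) (Rv (js k)) (Rv (js a))" using chain[of a k "Rv (js a)"] a k by simp
    then have "conn (F k) (Rv (js k)) (Rv (js b))" using c conn_trans by blast
    with notA b show False by blast
  qed
  have partB: "\<forall>k k'. 1 \<le> k \<and> k \<le> k' \<and> k' \<le> L - 1 \<longrightarrow> ii' k \<noteq> ii k'"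
  proof (intro allI impI notI)
    fix k k' assume kk: "1 \<le> k \<and> k \<le> k' \<and> k' \<le> L - 1" and eq: "ii' k = ii k'"
    have k1: "k - 1 < L" "Suc (k - 1) = k" using kk l by auto
    have "conn (F (k - 1)) (Rv (js (k - 1))) (Lv (ii' k))" using D1[OF k1(1)] k1(2) by simp
    moreover have kk2: "k - 1 \<le> k'" "k' < L" using kk l by auto
    ultimately have "conn (F k') (Rv (js k')) (Lv (ii' k))" using chain by blast
    then have "conn (F k') (Lv (ii k')) (Rv (js k'))" using eq conn_sym by simp
    with BTa[OF kk2(2)] show False by simp
  qed
  have partC: "\<forall>i k. k \<le> L \<and> (i, js k) \<in> T_t d \<G> t \<longrightarrow>
          (\<forall>k'. k \<le> k' \<and> k' \<le> L - 1 \<longrightarrow> ii k' \<noteq> i) \<and>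
          (\<forall>k'. 1 \<le> k' \<and> k' \<le> k \<longrightarrow> ii' k' \<noteq> i)"
  proof (intro allI impI conjI notI)
    fix i k assume h: "k \<le> L \<and> (i, js k) \<in> T_t d \<G> t"
    have inT: "\<And>m. m \<le> L \<Longrightarrow> (i, js k) \<in> T m"
      using h jsd unfolding T_t_def T_def by blast
    {
      fix k' assume kk: "k \<le> k' \<and> k' \<le> L - 1" and eq: "ii k' = i"
      have k'L: "k' < L" using kk l by linarith
      show False
      proof (cases "k = k'")
        case True
        then show False using nin1[OF k'L] inT[of "Suc k'"] k'L eq by simp
      next
        case False
        have "(i, js k) \<in> F k'" using inT[of k'] k'L jsinj[of k k'] False kk h unfolding F_def by auto
        then have c1: "conn (F k') (Lv i) (Rv (js k))" by (rule conn_edge)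
        have X: "conn (F k') (Rv (js k')) (Rv (js k))" using chain[of k k'] kk k'L by simp
        have "conn (F k') (Lv (ii k')) (Rv (js k'))" using conn_trans[OF c1 conn_sym[OF X]] eq by simp
        with BTa[OF k'L] show False by simp
      qed
    }
    {
      fix k' assume kk: "1 \<le> k' \<and> k' \<le> k" and eq: "ii' k' = i"
      have p: "k' - 1 < L" "Suc (k' - 1) = k'" using kk h by auto
      show False
      proof (cases "k = k'")
        case True
        then show False using nin2[OF p(1)] inT[of "k' - 1"] p eq by simp
      next
        case False
        have "(i, js k) \<in> T k'" using inT kk h by simp
        moreover have "js k \<noteq> js k'" using jsinj[of k k'] False kk h by simp
        ultimately have "(i, js k) \<in> F (k' - 1)" using F2[OF p(1)] p by auto
        then have c1: "conn (F (k' - 1)) (Lv i) (Rv (js k))" by (rule conn_edge)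
        have "conn (F (k' - 1)) (Rv (js (k' - 1))) (Lv (ii' k'))" using D1[OF p(1)] p by simp
        then have "conn (F (k' - 1)) (Rv (js (k' - 1))) (Rv (js k))" using c1 eq conn_trans by simp
        moreover have "k' - 1 \<le> k - 1" "k - 1 < L" using kk h by auto
        ultimately have "conn (F (k - 1)) (Rv (js (k - 1))) (Rv (js k))"
          using chain by blast
        moreover have "k - 1 < L" "Suc (k - 1) = k" using kk h False by auto
        ultimately show False using L1k[of "k - 1"] by simp
      qed
    }
  qed
  show ?thesis unfolding Fdef using partA partB partC by blast
qed

end
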